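(* Fix job indices $s,k'$ and an integer time $\theta\ge r_s$ such that every job $j\le k'$ with $r_s\le r_j<\theta$ satisfies $C^{\mathrm{edf}}_{s,j}\le\theta$. Suppose there is an $(s,k')$-schedule $Q$ with $C_{\max}(Q)>\theta$ and at most $g$ gaps. Then there is an $(s,k')$-schedule $R$ that schedules all jobs $j\le k'$ with $r_s\le r_j<\theta$ and satisfies: (a) $C_{\max}(R)\le\theta$ and $R$ has at most $g$ gaps; (b) if $C_{\max}(R)<\theta$ then $R$ has strictly fewer than $g$ gaps.
   Context: Time is discrete (slots $[t,t+1)$). There are $n$ jobs, job $j$ with integer processing time $p_j\ge1$, release time $r_j$, deadline $d_j$; jobs are indexed so that $d_1<\dots<d_n$, release times are pairwise distinct, and the instance is feasible. A (partial, preemptive) schedule assigns to each slot at most one job so that each job it schedules receives exactly $p_j$ slots in $[r_j,d_j)$; schedules are taken with the earliest-deadline property (whenever busy at slot $t$, run the released, not yet completed scheduled job of smallest deadline). $C_j(S)$ is the completion time of $j$, $C_{\max}(S)=\max_jC_j(S)$. For $s\in\{1,\dots,n\}$, $k\in\{0,\dots,n\}$, an $(s,k)$-schedule is a schedule $S$ with $C_{\max}(S)\le d_k$ scheduling exactly the jobs $j\le k$ with $r_s\le r_j<C_{\max}(S)$; the empty schedule counts, with $C_{\max}=r_s$. Gaps of an $(s,k)$-schedule: maximal idle intervals between its blocks (maximal busy intervals), plus the idle interval from $r_s$ to its first block if nonempty. For $r_j\ge r_s$, $C^{\mathrm{edf}}_{s,j}$ is the minimum completion time of job $j$ over all $(s,j)$-schedules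 that schedule $j$. *)

theory Defs
  imports Main
begin

text \<open>Jobs are indexed by 1..n; job j has processing time p j, release time r j,
  deadline d j. Time is discrete: a schedule maps each integer slot t (the slot [t,t+1))
  to at most one job (None = idle).\<close>

type_synonym schedule = "int \<Rightarrow> nat option"

definition sched_jobs :: "schedule \<Rightarrow> nat set" where
  "sched_jobs S = {j. \<exists>t. S t = Some j}"

definition busy :: "schedule \<Rightarrow> int set" where
  "busy S = {t. S t \<noteq> None}"

definition compl :: "schedule \<Rightarrow> nat \<Rightarrow> int" where
  "compl S j = Max ((\<lambda>t. t + 1) ` {t. S t = Some j})"

text \<open>A (partial, preemptive) schedule with the earliest-deadline property.\<close>
definition valid_schedule ::
  "nat \<Rightarrow> (nat \<Rightarrow> nat) \<Rightarrow> (nat \<Rightarrow> int) \<Rightarrow> (nat \<Rightarrow> int) \<Rightarrow> schedule \<Rightarrow> bool" where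
  "valid_schedule n p r d S \<longleftrightarrow>
     (\<forall>t j. S t = Some j \<longrightarrow> 1 \<le> j \<and> j \<le> n \<and> r j \<le> t \<and> t < d j) \<and>
     (\<forall>j \<in> sched_jobs S. card {t. S t = Some j} = p j) \<and>
     (\<forall>t j j'. S t = Some j \<longrightarrow> j' \<in> sched_jobs S \<longrightarrow> r j' \<le> t \<longrightarrow>
        (\<exists>t'\<ge>t. S t' = Some j') \<longrightarrow> d j \<le> d j')"

definition feasible ::
  "nat \<Rightarrow> (nat \<Rightarrow> nat) \<Rightarrow> (nat \<Rightarrow> int) \<Rightarrow> (nat \<Rightarrow> int) \<Rightarrow> bool" where
  "feasible n p r d \<longleftrightarrow> (\<exists>S. valid_schedule n p r d S \<and> sched_jobs S = {1..n})"

definition cmax :: "(nat \<Rightarrow> int) \<Rightarrow> nat \<Rightarrow> schedule \<Rightarrow> int" where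
  "cmax r s S = (if busy S = {} then r s else Max ((\<lambda>t. t + 1) ` busy S))"

definition sk_schedule ::
  "nat \<Rightarrow> (nat \<Rightarrow> nat) \<Rightarrow> (nat \<Rightarrow> int) \<Rightarrow> (nat \<Rightarrow> int) \<Rightarrow> nat \<Rightarrow> nat \<Rightarrow> schedule \<Rightarrow> bool" where
  "sk_schedule n p r d s k S \<longleftrightarrow>
     valid_schedule n p r d S \<and> cmax r s S \<le> d k \<and>
     sched_jobs S = {j. 1 \<le> j \<and> j \<le> k \<and> r s \<le> r j \<and> r j < cmax r s S}"

text \<open>Gaps of an (s,k)-schedule: maximal idle intervals [a,b) with a \<ge> r s that end
  at a busy slot b (i.e. lie before the last block) and start either at r s or right
  after a busy slot.\<close>
definition gaps :: "(nat \<Rightarrow> int) \<Rightarrow> nat \<Rightarrow> schedule \<Rightarrow> (int \<times> int) set" where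
  "gaps r s S = {(a, b). r s \<le> a \<and> a < b \<and> (\<forall>t. a \<le> t \<and> t < b \<longrightarrow> S t = None) \<and>
       S b \<noteq> None \<and> (a = r s \<or> S (a - 1) \<noteq> None)}"

end

theory Submission
  imports Defs
begin


lemma valid_slot: "valid_schedule n p r d S \<Longrightarrow> S t = Some j \<Longrightarrow> 1 \<le> j \<and> j \<le> n \<and> r j \<le> t \<and> t < d j"
  unfolding valid_schedule_def by blast

lemma valid_edf: "valid_schedule n p r d S \<Longrightarrow> S t = Some j \<Longrightarrow> j' \<in> sched_jobs S \<Longrightarrow> r j' \<le> t
   \<Longrightarrow> t \<le> t' \<Longrightarrow> S t' = Some j' \<Longrightarrow> d j \<le> d j'"
  unfolding valid_schedule_def by blast

lemma valid_cnt: "valid_schedule n p r d S \<Longrightarrow> j \<in> sched_jobs S \<Longrightarrow> card {t. S t = Some j} = p j"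
  unfolding valid_schedule_def by blast

lemma valid_busy_fin: assumes "valid_schedule n p r d S" shows "finite (busy S)"
proof -
  have "busy S \<subseteq> (\<Union>i\<in>{1..n}. {r i..<d i})"
    using valid_slot[OF assms] unfolding busy_def by fastforce
  thus ?thesis by (rule finite_subset) auto
qed

lemma valid_slots_fin: "valid_schedule n p r d S \<Longrightarrow> finite {t. S t = Some j}"
  by (rule finite_subset[of _ "{r j..<d j}"]) (auto dest: valid_slot)

lemma cmax_ge: "finite (busy S) \<Longrightarrow> S t \<noteq> None \<Longrightarrow> t + 1 \<le> cmax r s S"
proof -
  assume f: "finite (busy S)" and t: "S t \<noteq> None"
  hence tb: "t \<in> busy S" unfolding busy_def by simp
  hence "busy S \<noteq> {}" by blast
  hence "cmax r s S = Max ((\<lambda>t. t + 1) ` busy S)" unfolding cmax_def by simp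
  moreover have "(\<lambda>t. t + 1) t \<le> Max ((\<lambda>t. t + 1) ` busy S)"
    by (rule Max_ge[OF finite_imageI[OF f] imageI[OF tb]])
  ultimately show ?thesis by simp
qed

lemma cmax_le: "finite (busy S) \<Longrightarrow> (\<forall>t. S t \<noteq> None \<longrightarrow> t < b) \<Longrightarrow> r s \<le> b \<Longrightarrow> cmax r s S \<le> b"
proof -
  assume f: "finite (busy S)" and a: "\<forall>t. S t \<noteq> None \<longrightarrow> t < b" "r s \<le> b"
  show ?thesis
  proof (cases "busy S = {}")
    case True thus ?thesis using a unfolding cmax_def by simp
  next
    case False
    hence "cmax r s S = Max ((\<lambda>t. t + 1) ` busy S)" unfolding cmax_def by simp
    moreover have "Max ((\<lambda>t. t + 1) ` busy S) \<le> b"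
      using f False a(1) unfolding busy_def by (subst Max_le_iff) auto
    ultimately show ?thesis by simp
  qed
qed

lemma cmax_ge_rs: "finite (busy S) \<Longrightarrow> (\<forall>t. S t \<noteq> None \<longrightarrow> r s \<le> t) \<Longrightarrow> r s \<le> cmax r s S"
proof -
  assume f: "finite (busy S)" and a: "\<forall>t. S t \<noteq> None \<longrightarrow> r s \<le> t"
  show ?thesis
  proof (cases "busy S = {}")
    case True thus ?thesis unfolding cmax_def by simp
  next
    case False
    then obtain t where "S t \<noteq> None" unfolding busy_def by auto
    thus ?thesis using cmax_ge[OF f, of t r s] a by force
  qed
qed

lemma card_swap: "finite A \<Longrightarrow> a \<in> A \<Longrightarrow> b \<notin> A \<Longrightarrow> card (insert b (A - {a})) = card A"
proof -
  assume a: "finite A" "a \<in> A" "b \<notin> A"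
  have "card (A - {a}) = card A - 1" using a by (simp add: card_Diff_singleton)
  moreover have "card A > 0" using a card_gt_0_iff by blast
  ultimately show ?thesis using a by simp
qed

lemma gap_exists:
  assumes fin: "finite (busy Q)" and m: "r s \<le> m" "Q m = None" and later: "t > m" "Q t \<noteq> None"
  shows "\<exists>a b. (a,b) \<in> gaps r s Q \<and> a \<le> m \<and> m < b"
proof -
  define B where "B = {t. m < t \<and> Q t \<noteq> None}"
  have Bfin: "finite B" using fin unfolding B_def busy_def by (rule finite_subset[rotated]) auto
  have Bne: "B \<noteq> {}" using later unfolding B_def by auto
  define b where "b = Min B"
  have bB: "b \<in> B" using Bfin Bne b_def by simp
  have bmin: "\<And>t. t \<in> B \<Longrightarrow> b \<le> t" using Bfin b_def by simp
  define A where "A = {t. r s \<le> t \<and> t < m \<and> Q t \<noteq> None}"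
  have Afin: "finite A" using fin unfolding A_def busy_def by (rule finite_subset[rotated]) auto
  define a where "a = (if A = {} then r s else Max A + 1)"
  have aA: "A \<noteq> {} \<Longrightarrow> Max A \<in> A" using Afin by simp
  have amax: "\<And>t. t \<in> A \<Longrightarrow> t \<le> Max A" using Afin by simp
  have "a \<le> m"
  proof (cases "A = {}")
    case True thus ?thesis using m unfolding a_def by simp
  next
    case False
    have "Max A < m" using aA[OF False] unfolding A_def by blast
    thus ?thesis using False unfolding a_def by simp
  qed
  moreover have "m < b" using bB unfolding B_def by auto
  moreover have "r s \<le> a"
  proof (cases "A = {}")
    case True thus ?thesis unfolding a_def by simp
  next
    case False
    have "r s \<le> Max A" using aA[OF False] unfolding A_def by blast
    thus ?thesis using False unfolding a_def by simp
  qed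
  moreover have "\<forall>t. a \<le> t \<and> t < b \<longrightarrow> Q t = None"
  proof (intro allI impI)
    fix t assume t: "a \<le> t \<and> t < b"
    show "Q t = None"
    proof (cases "t < m")
      case True
      show ?thesis
      proof (rule ccontr)
        assume "Q t \<noteq> None"
        hence "t \<in> A" using True t \<open>r s \<le> a\<close> unfolding A_def by auto
        thus False using amax[of t] t unfolding a_def by (auto split: if_splits)
      qed
    next
      case False
      show ?thesis
      proof (cases "t = m")
        case True thus ?thesis using m by simp
      next
        case False
        hence "m < t" using \<open>\<not> t < m\<close> by simp
        thus ?thesis using bmin[of t] t unfolding B_def by force
      qed
    qed
  qed
  moreover have "Q b \<noteq> None" using bB unfolding B_def by auto
  moreover have "a = r s \<or> Q (a - 1) \<noteq> None"
  proof (cases "A = {}")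
    case True thus ?thesis unfolding a_def by simp
  next
    case False
    have "Q (Max A) \<noteq> None" using aA[OF False] unfolding A_def by blast
    thus ?thesis using False unfolding a_def by simp
  qed
  ultimately show ?thesis unfolding gaps_def
    by (intro exI[of _ a] exI[of _ b]) simp
qed




locale L8 =
  fixes n :: nat and p :: "nat \<Rightarrow> nat" and r d :: "nat \<Rightarrow> int"
    and s k' :: nat and \<theta> :: int and Q :: schedule
  assumes p_pos: "\<forall>j \<in> {1..n}. 1 \<le> p j"
    and d_mono: "strict_mono_on {1..n} d"
    and s: "s \<in> {1..n}" and k': "k' \<in> {1..n}"
    and theta: "r s \<le> \<theta>"
    and edf: "\<forall>j. 1 \<le> j \<and> j \<le> k' \<and> r s \<le> r j \<and> r j < \<theta> \<longrightarrow>
               (\<exists>S. sk_schedule n p r d s j S \<and> j \<in> sched_jobs S \<and> compl S j \<le> \<theta>)"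
    and Q: "sk_schedule n p r d s k' Q"
    and Q_late: "cmax r s Q > \<theta>"
begin

definition J where "J = {j. 1 \<le> j \<and> j \<le> k' \<and> r s \<le> r j \<and> r j < \<theta>}"

lemma J_sub: "J \<subseteq> {1..n}" using k' by (auto simp: J_def)
lemma finJ: "finite J" using J_sub by (rule finite_subset) simp

lemma d_le_imp: "i \<in> {1..n} \<Longrightarrow> j \<in> {1..n} \<Longrightarrow> d i \<le> d j \<Longrightarrow> i \<le> j"
  using strict_mono_onD[OF d_mono, of j i] by (metis not_le)

lemma Qv: "valid_schedule n p r d Q" using Q unfolding sk_schedule_def by blast
lemma Qsched: "sched_jobs Q = {j. 1 \<le> j \<and> j \<le> k' \<and> r s \<le> r j \<and> r j < cmax r s Q}"
  using Q unfolding sk_schedule_def by blast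
lemma Qbusy_fin: "finite (busy Q)" using valid_busy_fin[OF Qv] .

lemma J_Q: "J \<subseteq> sched_jobs Q" using Q_late by (auto simp: J_def Qsched)

lemma Q_pre: "t < \<theta> \<Longrightarrow> Q t = Some j \<Longrightarrow> j \<in> J"
proof -
  assume a: "t < \<theta>" "Q t = Some j"
  hence "j \<in> sched_jobs Q" unfolding sched_jobs_def by blast
  moreover have "r j \<le> t" using valid_slot[OF Qv a(2)] by blast
  ultimately show ?thesis using a Qsched unfolding J_def by auto
qed

lemma Q_cnt: "j \<in> J \<Longrightarrow> card {t. Q t = Some j} = p j"
  using J_Q Qv unfolding valid_schedule_def by blast

lemma Q_late_busy: "\<exists>t. \<theta> \<le> t \<and> Q t \<noteq> None"
proof -
  have ne: "busy Q \<noteq> {}" using Q_late theta unfolding cmax_def by auto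
  hence "cmax r s Q = Max ((\<lambda>t. t + 1) ` busy Q)" unfolding cmax_def by simp
  moreover have "Max ((\<lambda>t. t + 1) ` busy Q) \<in> (\<lambda>t. t + 1) ` busy Q"
    using ne Qbusy_fin by (intro Max_in) auto
  ultimately obtain t where "t \<in> busy Q" "t + 1 = cmax r s Q" by auto
  thus ?thesis using Q_late unfolding busy_def by (intro exI[of _ t]) auto
qed

definition Q' :: schedule where
  "Q' t = (case Q t of None \<Rightarrow> None | Some j \<Rightarrow> if j \<in> J then Some j else None)"

lemma Q'_pre: "t < \<theta> \<Longrightarrow> Q' t = Q t"
proof (cases "Q t")
  case None thus ?thesis unfolding Q'_def by simp
next
  case (Some j)
  assume "t < \<theta>"
  hence "j \<in> J" using Q_pre Some by blast
  thus ?thesis unfolding Q'_def using Some by simp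
qed

definition M where
  "M z = {S. (\<forall>t j. S t = Some j \<longrightarrow> j \<in> J \<and> r j \<le> t \<and> t < d j) \<and>
            (\<forall>j\<in>J. card {t. S t = Some j} = p j) \<and> (\<forall>t<z. S t = Q t)}"

lemma Q'_M: "z \<le> \<theta> \<Longrightarrow> Q' \<in> M z"
proof -
  assume z: "z \<le> \<theta>"
  have 1: "\<forall>t j. Q' t = Some j \<longrightarrow> j \<in> J \<and> r j \<le> t \<and> t < d j"
  proof (intro allI impI)
    fix t j assume "Q' t = Some j"
    hence "Q t = Some j" "j \<in> J" unfolding Q'_def by (auto split: option.splits if_splits)
    thus "j \<in> J \<and> r j \<le> t \<and> t < d j" using valid_slot[OF Qv] by blast
  qed
  have "\<And>j. j \<in> J \<Longrightarrow> {t. Q' t = Some j} = {t. Q t = Some j}"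
    unfolding Q'_def by (auto split: option.splits if_splits)
  hence 2: "\<forall>j\<in>J. card {t. Q' t = Some j} = p j" using Q_cnt by simp
  have 3: "\<forall>t<z. Q' t = Q t" using Q'_pre z by simp
  show ?thesis unfolding M_def using 1 2 3 by blast
qed

lemma M_slot: "S \<in> M z \<Longrightarrow> S t = Some j \<Longrightarrow> j \<in> J \<and> r j \<le> t \<and> t < d j"
  unfolding M_def by blast
lemma M_cnt: "S \<in> M z \<Longrightarrow> j \<in> J \<Longrightarrow> card {t. S t = Some j} = p j"
  unfolding M_def by blast
lemma M_pre: "S \<in> M z \<Longrightarrow> t < z \<Longrightarrow> S t = Q t"
  unfolding M_def by blast

definition A where "A = (\<Union>j\<in>J. {r j..<d j})"
lemma finA: "finite A" unfolding A_def using finJ by (intro finite_UN_I) auto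

lemma M_busy_sub: assumes S: "S \<in> M z" shows "{t. S t \<noteq> None} \<subseteq> A"
proof
  fix t assume "t \<in> {t. S t \<noteq> None}"
  then obtain j where j: "S t = Some j" by blast
  from M_slot[OF S j] have "j \<in> J" "r j \<le> t" "t < d j" by auto
  thus "t \<in> A" unfolding A_def by auto
qed
lemma M_busy_fin: "S \<in> M z \<Longrightarrow> finite {t. S t \<noteq> None}"
  by (rule finite_subset[OF M_busy_sub finA])
lemma M_slots_fin: "S \<in> M z \<Longrightarrow> finite {t. S t = Some j}"
proof -
  assume S: "S \<in> M z"
  have "{t. S t = Some j} \<subseteq> {t. S t \<noteq> None}" by blast
  thus ?thesis using M_busy_fin[OF S] by (rule finite_subset)
qed

lemma finM: "finite (M z)"
proof -
  have "M z \<subseteq> {f. \<forall>x. (x \<in> A \<longrightarrow> f x \<in> insert None (Some ` J)) \<and> (x \<notin> A \<longrightarrow> f x = None)}"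
  proof (intro subsetI CollectI allI conjI impI)
    fix S x assume S: "S \<in> M z"
    show "x \<in> A \<Longrightarrow> S x \<in> insert None (Some ` J)"
      using M_slot[OF S] by (cases "S x") auto
    show "x \<notin> A \<Longrightarrow> S x = None" using M_busy_sub[OF S] by blast
  qed
  moreover have "finite {f. \<forall>x. (x \<in> A \<longrightarrow> f x \<in> insert None (Some ` J)) \<and> (x \<notin> A \<longrightarrow> f x = None)}"
    by (rule finite_set_of_finite_funs[OF finA]) (simp add: finJ)
  ultimately show ?thesis by (rule finite_subset)
qed

lemma M_total: "S \<in> M z \<Longrightarrow> card {t. S t \<noteq> None} = (\<Sum>j\<in>J. p j)"
proof -
  assume S: "S \<in> M z"
  have "{t. S t \<noteq> None} = (\<Union>j\<in>J. {t. S t = Some j})" using M_slot[OF S] by auto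
  hence "card {t. S t \<noteq> None} = (\<Sum>j\<in>J. card {t. S t = Some j})"
    using finJ M_slots_fin[OF S] by (simp, subst card_UN_disjoint) auto
  thus ?thesis using M_cnt[OF S] by simp
qed

lemma M_later: "S \<in> M z \<Longrightarrow> z \<le> t' \<Longrightarrow> S t' = Some j \<Longrightarrow> \<exists>t''\<ge>z. Q t'' = Some j"
proof (rule ccontr)
  assume S: "S \<in> M z" and t': "z \<le> t'" "S t' = Some j" and no: "\<not> (\<exists>t''\<ge>z. Q t'' = Some j)"
  have jJ: "j \<in> J" using M_slot[OF S t'(2)] by blast
  have "{t. Q t = Some j} \<subseteq> {t. S t = Some j} - {t'}"
  proof
    fix t assume "t \<in> {t. Q t = Some j}"
    hence q: "Q t = Some j" by simp
    hence "t < z" using no by (meson not_le)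
    thus "t \<in> {t. S t = Some j} - {t'}" using q M_pre[OF S] t'(1) by auto
  qed
  hence "card {t. Q t = Some j} \<le> card ({t. S t = Some j} - {t'})"
    using M_slots_fin[OF S] by (intro card_mono) auto
  also have "\<dots> < card {t. S t = Some j}"
    using M_slots_fin[OF S] t' by (intro card_Diff1_less) auto
  finally show False using Q_cnt[OF jJ] M_cnt[OF S jJ] by simp
qed

end



context L8
begin

definition Phi1 :: "int \<Rightarrow> schedule \<Rightarrow> int" where
  "Phi1 z S = (\<Sum>t\<in>{t. z \<le> t \<and> S t \<noteq> None}. t)"
definition Phi2 :: "schedule \<Rightarrow> int" where
  "Phi2 S = (\<Sum>t\<in>{t. S t \<noteq> None}. t * d (the (S t)))"

lemma move_M:
  assumes S: "S \<in> M z" and t: "z \<le> t" "S t = None" and t': "S t' = Some j" "r j \<le> t" "t < t'"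
  shows "S(t := Some j, t' := None) \<in> M z"
    and "Phi1 z (S(t := Some j, t' := None)) < Phi1 z S"
proof -
  let ?S = "S(t := Some j, t' := None)"
  have jJ: "j \<in> J" and dj: "t' < d j" using M_slot[OF S t'(1)] by auto
  have tt': "t \<noteq> t'" using t' by simp
  have 1: "\<forall>u i. ?S u = Some i \<longrightarrow> i \<in> J \<and> r i \<le> u \<and> u < d i"
  proof (intro allI impI)
    fix u i assume a: "?S u = Some i"
    show "i \<in> J \<and> r i \<le> u \<and> u < d i"
    proof (cases "u = t")
      case True thus ?thesis using a tt' jJ t' dj by auto
    next
      case False
      hence "S u = Some i" using a by (auto split: if_splits)
      thus ?thesis using M_slot[OF S] by blast
    qed
  qed
  have 2: "\<forall>i\<in>J. card {u. ?S u = Some i} = p i"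
  proof
    fix i assume iJ: "i \<in> J"
    show "card {u. ?S u = Some i} = p i"
    proof (cases "i = j")
      case True
      have "{u. ?S u = Some i} = insert t ({u. S u = Some i} - {t'})"
        using True tt' t by auto
      moreover have "card (insert t ({u. S u = Some i} - {t'})) = card {u. S u = Some i}"
        using True t t' M_slots_fin[OF S] by (intro card_swap) auto
      ultimately show ?thesis using M_cnt[OF S iJ] by simp
    next
      case False
      have "{u. ?S u = Some i} = {u. S u = Some i}" using False t t' by auto
      thus ?thesis using M_cnt[OF S iJ] by simp
    qed
  qed
  have 3: "\<forall>u<z. ?S u = Q u" using M_pre[OF S] t t' by auto
  show "?S \<in> M z" unfolding M_def using 1 2 3 by blast
  define B where "B = {u. z \<le> u \<and> S u \<noteq> None}"
  have fB: "finite B" unfolding B_def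
    by (rule finite_subset[OF _ M_busy_fin[OF S]]) blast
  have t'B: "t' \<in> B" using t t' unfolding B_def by auto
  have tB: "t \<notin> B" using t unfolding B_def by auto
  have eq: "{u. z \<le> u \<and> ?S u \<noteq> None} = insert t (B - {t'})"
    unfolding B_def using t t' tt' by auto
  have "Phi1 z ?S = t + (\<Sum>u\<in>B - {t'}. u)"
    unfolding Phi1_def eq using fB tB by simp
  also have "(\<Sum>u\<in>B - {t'}. u) = (\<Sum>u\<in>B. u) - t'"
    using fB t'B by (simp add: sum_diff1)
  finally show "Phi1 z ?S < Phi1 z S" unfolding Phi1_def B_def[symmetric] using t' by simp
qed

lemma swap_M:
  assumes S: "S \<in> M z" and t: "z \<le> t" "S t = Some i" and t': "S t' = Some j" "r j \<le> t" "t < t'"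
    and dd: "d j < d i"
  shows "S(t := Some j, t' := Some i) \<in> M z"
    and "Phi1 z (S(t := Some j, t' := Some i)) = Phi1 z S"
    and "Phi2 (S(t := Some j, t' := Some i)) > Phi2 S"
proof -
  let ?S = "S(t := Some j, t' := Some i)"
  have jJ: "j \<in> J" and dj: "t' < d j" using M_slot[OF S t'(1)] by auto
  have iJ: "i \<in> J" and ri: "r i \<le> t" using M_slot[OF S t(2)] by auto
  have tt': "t \<noteq> t'" using t' by simp
  have ij: "i \<noteq> j" using dd by auto
  have 1: "\<forall>u k. ?S u = Some k \<longrightarrow> k \<in> J \<and> r k \<le> u \<and> u < d k"
  proof (intro allI impI)
    fix u k assume a: "?S u = Some k"
    show "k \<in> J \<and> r k \<le> u \<and> u < d k"
    proof (cases "u = t")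
      case True thus ?thesis using a tt' jJ t' dj by auto
    next
      case False
      show ?thesis
      proof (cases "u = t'")
        case True thus ?thesis using a iJ ri t' dj dd by auto
      next
        case False
        hence "S u = Some k" using a \<open>u \<noteq> t\<close> by (auto split: if_splits)
        thus ?thesis using M_slot[OF S] by blast
      qed
    qed
  qed
  have 2: "\<forall>k\<in>J. card {u. ?S u = Some k} = p k"
  proof
    fix k assume kJ: "k \<in> J"
    show "card {u. ?S u = Some k} = p k"
    proof (cases "k = j")
      case True
      have "{u. ?S u = Some k} = insert t ({u. S u = Some k} - {t'})"
        using True tt' t t' ij by auto
      moreover have "card (insert t ({u. S u = Some k} - {t'})) = card {u. S u = Some k}"
        using True t t' M_slots_fin[OF S] ij by (intro card_swap) auto
      ultimately show ?thesis using M_cnt[OF S kJ] by simp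
    next
      case False
      show ?thesis
      proof (cases "k = i")
        case True
        have "{u. ?S u = Some k} = insert t' ({u. S u = Some k} - {t})"
          using True tt' t t' ij by auto
        moreover have "card (insert t' ({u. S u = Some k} - {t})) = card {u. S u = Some k}"
          using True t t' M_slots_fin[OF S] ij by (intro card_swap) auto
        ultimately show ?thesis using M_cnt[OF S kJ] by simp
      next
        case False
        have "{u. ?S u = Some k} = {u. S u = Some k}" using False \<open>k \<noteq> j\<close> t t' by auto
        thus ?thesis using M_cnt[OF S kJ] by simp
      qed
    qed
  qed
  have 3: "\<forall>u<z. ?S u = Q u" using M_pre[OF S] t t' by auto
  show "?S \<in> M z" unfolding M_def using 1 2 3 by blast
  have beq: "\<And>y. {u. y \<le> u \<and> ?S u \<noteq> None} = {u. y \<le> u \<and> S u \<noteq> None}" using t t' by auto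
  show "Phi1 z ?S = Phi1 z S" unfolding Phi1_def beq ..
  define B where "B = {u. S u \<noteq> None}"
  have fB: "finite B" unfolding B_def by (rule M_busy_fin[OF S])
  have beq2: "{u. ?S u \<noteq> None} = B" unfolding B_def using t t' by auto
  define g where "g = (\<lambda>u. u * d (the (S u)))"
  define g' where "g' = (\<lambda>u. u * d (the (?S u)))"
  have sub: "{t, t'} \<subseteq> B" unfolding B_def using t t' by auto
  have "(\<Sum>u\<in>B. g' u - g u) = (\<Sum>u\<in>{t,t'}. g' u - g u)"
    by (rule sum.mono_neutral_right[OF fB sub]) (auto simp: g_def g'_def)
  also have "\<dots> = (t * d j - t * d i) + (t' * d i - t' * d j)"
    using tt' t t' by (simp add: g_def g'_def)
  also have "\<dots> = (t' - t) * (d i - d j)" by (simp add: algebra_simps)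
  also have "\<dots> > 0" using t' dd by simp
  finally have "(\<Sum>u\<in>B. g' u) - (\<Sum>u\<in>B. g u) > 0" by (simp add: sum_subtractf)
  thus "Phi2 ?S > Phi2 S" unfolding Phi2_def beq2 B_def[symmetric] g_def g'_def by simp
qed

lemma extremal:
  assumes z: "z \<le> \<theta>"
  obtains S where "S \<in> M z"
   and "\<forall>t i j t'. z \<le> t \<longrightarrow> S t = Some i \<longrightarrow> S t' = Some j \<longrightarrow> r j \<le> t \<longrightarrow> t \<le> t' \<longrightarrow> d i \<le> d j"
   and "\<forall>t j t'. z \<le> t \<longrightarrow> S t = None \<longrightarrow> S t' = Some j \<longrightarrow> r j \<le> t \<longrightarrow> t' \<le> t"
proof -
  have ne: "M z \<noteq> {}" using Q'_M[OF z] by blast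
  define m1 where "m1 = Min (Phi1 z ` M z)"
  define M1 where "M1 = {S\<in>M z. Phi1 z S = m1}"
  have m1le: "\<And>S. S \<in> M z \<Longrightarrow> m1 \<le> Phi1 z S" unfolding m1_def using finM by simp
  have "m1 \<in> Phi1 z ` M z" unfolding m1_def using finM ne by simp
  hence ne1: "M1 \<noteq> {}" unfolding M1_def by auto
  have fin1: "finite M1" unfolding M1_def using finM by simp
  define m2 where "m2 = Max (Phi2 ` M1)"
  have "m2 \<in> Phi2 ` M1" unfolding m2_def using fin1 ne1 by simp
  then obtain S where SM1: "S \<in> M1" and Sm2: "Phi2 S = m2" by auto
  have m2ge: "\<And>S'. S' \<in> M1 \<Longrightarrow> Phi2 S' \<le> m2" unfolding m2_def using fin1 by simp
  have SM: "S \<in> M z" and Sm1: "Phi1 z S = m1" using SM1 unfolding M1_def by auto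
  show ?thesis
  proof (rule that[OF SM])
    show "\<forall>t i j t'. z \<le> t \<longrightarrow> S t = Some i \<longrightarrow> S t' = Some j \<longrightarrow> r j \<le> t \<longrightarrow> t \<le> t' \<longrightarrow> d i \<le> d j"
    proof (intro allI impI)
      fix t i j t' assume a: "z \<le> t" "S t = Some i" "S t' = Some j" "r j \<le> t" "t \<le> t'"
      show "d i \<le> d j"
      proof (rule ccontr)
        assume "\<not> d i \<le> d j"
        hence dd: "d j < d i" by simp
        have "t \<noteq> t'" using a dd by auto
        hence tt: "t < t'" using a by simp
        note sw = swap_M[OF SM a(1,2,3,4) tt dd]
        have "S(t := Some j, t' := Some i) \<in> M1" using sw(1,2) Sm1 unfolding M1_def by simp
        hence "Phi2 (S(t := Some j, t' := Some i)) \<le> m2" by (rule m2ge)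
        thus False using sw(3) Sm2 by simp
      qed
    qed
    show "\<forall>t j t'. z \<le> t \<longrightarrow> S t = None \<longrightarrow> S t' = Some j \<longrightarrow> r j \<le> t \<longrightarrow> t' \<le> t"
    proof (intro allI impI)
      fix t j t' assume a: "z \<le> t" "S t = None" "S t' = Some j" "r j \<le> t"
      show "t' \<le> t"
      proof (rule ccontr)
        assume "\<not> t' \<le> t"
        hence tt: "t < t'" by simp
        note mv = move_M[OF SM a(1,2,3,4) tt]
        have "m1 \<le> Phi1 z (S(t := Some j, t' := None))" by (rule m1le[OF mv(1)])
        thus False using mv(2) Sm1 by simp
      qed
    qed
  qed
qed

end



context L8
begin

lemma key:
  assumes SM: "S \<in> M z" and z: "r s \<le> z" "z \<le> \<theta>"
    and edfS: "\<forall>t i j t'. z \<le> t \<longrightarrow> S t = Some i \<longrightarrow> S t' = Some j \<longrightarrow> r j \<le> t \<longrightarrow> t \<le> t' \<longrightarrow> d i \<le> d j"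
    and wc: "\<forall>t j t'. z \<le> t \<longrightarrow> S t = None \<longrightarrow> S t' = Some j \<longrightarrow> r j \<le> t \<longrightarrow> t' \<le> t"
    and start: "(\<exists>t0. z \<le> t0 \<and> t0 < \<theta> \<and> S t0 = None) \<or> z = r s"
    and u: "S u = Some j"
  shows "u < \<theta>"
proof (rule ccontr)
  assume "\<not> u < \<theta>" hence u\<theta>: "\<theta> \<le> u" by simp
  have jJ: "j \<in> J" using M_slot[OF SM u] by blast
  hence jn: "j \<in> {1..n}" using J_sub by blast
  obtain Sj where Sj: "sk_schedule n p r d s j Sj" "j \<in> sched_jobs Sj" "compl Sj j \<le> \<theta>"
    using edf jJ unfolding J_def by blast
  have SjV: "valid_schedule n p r d Sj" using Sj(1) unfolding sk_schedule_def by blast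
  have Sjsched: "sched_jobs Sj = {i. 1 \<le> i \<and> i \<le> j \<and> r s \<le> r i \<and> r i < cmax r s Sj}"
    using Sj(1) unfolding sk_schedule_def by blast
  define Tj where "Tj = {t. Sj t = Some j}"
  have Tjfin: "finite Tj" unfolding Tj_def by (rule valid_slots_fin[OF SjV])
  have Tjne: "Tj \<noteq> {}" using Sj(2) unfolding Tj_def sched_jobs_def by blast
  define c where "c = compl Sj j"
  have c_eq: "c = Max ((\<lambda>t. t+1) ` Tj)" unfolding c_def compl_def Tj_def ..
  have "c \<in> (\<lambda>t. t+1) ` Tj" unfolding c_eq using Tjfin Tjne by (intro Max_in) auto
  hence c1: "Sj (c - 1) = Some j" unfolding Tj_def by auto
  have Tjlt: "\<And>t. t \<in> Tj \<Longrightarrow> t < c"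
  proof -
    fix t assume "t \<in> Tj"
    hence "t + 1 \<le> c" unfolding c_eq using Tjfin by (intro Max_ge) auto
    thus "t < c" by simp
  qed
  have c\<theta>: "c \<le> \<theta>" using Sj(3) c_def by simp
  have rjc: "r j < c" using valid_slot[OF SjV c1] by simp
  have c_cmax: "c \<le> cmax r s Sj"
  proof -
    have cb: "c - 1 \<in> busy Sj" using c1 unfolding busy_def by simp
    hence "busy Sj \<noteq> {}" by blast
    hence "cmax r s Sj = Max ((\<lambda>t. t + 1) ` busy Sj)" unfolding cmax_def by simp
    moreover have "(\<lambda>t. t + 1) (c - 1) \<le> Max ((\<lambda>t. t + 1) ` busy Sj)"
      by (rule Max_ge[OF finite_imageI[OF valid_busy_fin[OF SjV]] imageI[OF cb]])
    ultimately show ?thesis by simp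
  qed
  have Sj_I: "\<And>i t. 1 \<le> i \<Longrightarrow> i \<le> j \<Longrightarrow> r s \<le> r i \<Longrightarrow> r i < c \<Longrightarrow>
      i \<in> sched_jobs Sj \<and> (Sj t = Some i \<longrightarrow> r i \<le> t \<and> t < c)"
  proof -
    fix i t assume i: "1 \<le> i" "i \<le> j" "r s \<le> r i" "r i < c"
    have isch: "i \<in> sched_jobs Sj" using i c_cmax Sjsched by auto
    moreover have "Sj t = Some i \<longrightarrow> r i \<le> t \<and> t < c"
    proof
      assume st: "Sj t = Some i"
      have "r i \<le> t" using valid_slot[OF SjV st] by simp
      moreover have "t < c"
      proof (rule ccontr)
        assume "\<not> t < c"
        hence "c - 1 \<le> t" by simp
        hence "d j \<le> d i" using valid_edf[OF SjV c1 isch _ _ st] i by simp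
        hence "j \<le> i" using d_le_imp[of j i] jn i by simp
        hence "i = j" using i by simp
        hence "t \<in> Tj" using st unfolding Tj_def by simp
        thus False using Tjlt \<open>\<not> t < c\<close> by blast
      qed
      ultimately show "r i \<le> t \<and> t < c" by simp
    qed
    ultimately show "i \<in> sched_jobs Sj \<and> (Sj t = Some i \<longrightarrow> r i \<le> t \<and> t < c)" by blast
  qed
  define Id where "Id = {t. z \<le> t \<and> t < \<theta> \<and> S t = None}"
  have Idfin: "finite Id" unfolding Id_def by (rule finite_subset[of _ "{z..<\<theta>}"]) auto
  define w0 where "w0 = (if Id = {} then z else Max Id + 1)"
  have IdM: "Id \<noteq> {} \<Longrightarrow> Max Id \<in> Id" using Idfin by simp
  have w0p: "z \<le> w0 \<and> w0 \<le> \<theta>"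
  proof (cases "Id = {}")
    case False
    have "Max Id \<in> Id" using IdM False by simp
    hence "z \<le> Max Id" "Max Id < \<theta>" unfolding Id_def by auto
    thus ?thesis using False unfolding w0_def by auto
  qed (simp add: w0_def z)
  hence w0ge: "z \<le> w0" and w0le: "w0 \<le> \<theta>" by auto
  have Id_lt: "\<And>t. t \<in> Id \<Longrightarrow> t < w0"
  proof -
    fix t assume "t \<in> Id"
    hence "t \<le> Max Id" "Id \<noteq> {}" using Idfin by auto
    thus "t < w0" unfolding w0_def by simp
  qed
  define X where "X = {x. w0 \<le> x \<and> x < \<theta> \<and> (\<exists>i. S x = Some i \<and> d j < d i)}"
  have Xfin: "finite X" unfolding X_def by (rule finite_subset[of _ "{w0..<\<theta>}"]) auto
  define w where "w = (if X = {} then w0 else Max X + 1)"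
  have XM: "X \<noteq> {} \<Longrightarrow> Max X \<in> X" using Xfin by simp
  have wp: "w0 \<le> w \<and> w \<le> \<theta>"
  proof (cases "X = {}")
    case False
    have "Max X \<in> X" using XM False by simp
    hence "w0 \<le> Max X" "Max X < \<theta>" unfolding X_def by auto
    thus ?thesis using False unfolding w_def by auto
  qed (simp add: w_def w0le)
  hence ww0: "w0 \<le> w" and wle: "w \<le> \<theta>" by auto
  have X_lt: "\<And>t. t \<in> X \<Longrightarrow> t < w"
  proof -
    fix t assume "t \<in> X"
    hence "t \<le> Max X" "X \<noteq> {}" using Xfin by auto
    thus "t < w" unfolding w_def by simp
  qed
  have claim: "\<And>i u'. S u' = Some i \<Longrightarrow> w \<le> u' \<Longrightarrow> d i \<le> d j \<Longrightarrow> w \<le> r i"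
  proof (rule ccontr)
    fix i u' assume a: "S u' = Some i" "w \<le> u'" "d i \<le> d j" and "\<not> w \<le> r i"
    hence riw: "r i < w" by simp
    have iJ: "i \<in> J" using M_slot[OF SM a(1)] by blast
    hence ris: "r s \<le> r i" unfolding J_def by simp
    show False
    proof (cases "X = {}")
      case False
      define x where "x = Max X"
      have xX: "x \<in> X" using XM[OF False] x_def by simp
      then obtain y where y: "S x = Some y" "d j < d y" "w0 \<le> x" "x < \<theta>" unfolding X_def by blast
      have wx: "w = x + 1" using False unfolding w_def x_def by simp
      show False
      proof (cases "r i \<le> x")
        case True
        have "z \<le> x" "x \<le> u'" using y a w0ge wx by auto
        hence "d y \<le> d i" using edfS y(1) a(1) True by blast
        thus False using y a by simp
      next
        case False thus False using riw wx by simp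
      qed
    next
      case True
      hence ww: "w = w0" unfolding w_def by simp
      show False
      proof (cases "Id = {}")
        case False
        define t0 where "t0 = Max Id"
        have t0: "t0 \<in> Id" using IdM[OF False] t0_def by simp
        have w0t: "w0 = t0 + 1" using False unfolding w0_def t0_def by simp
        have "u' \<le> t0" using wc t0 a riw ww w0t unfolding Id_def by auto
        thus False using a ww w0t by simp
      next
        case True
        hence "\<not> (\<exists>t0. z \<le> t0 \<and> t0 < \<theta> \<and> S t0 = None)" unfolding Id_def by blast
        hence "z = r s" using start by blast
        thus False using ris riw ww True unfolding w0_def by simp
      qed
    qed
  qed
  have rjw: "w \<le> r j" using claim[OF u] wle u\<theta> by simp
  define I' where "I' = {i. 1 \<le> i \<and> i \<le> j \<and> w \<le> r i \<and> r i < c}"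
  have finI': "finite I'" unfolding I'_def by (rule finite_subset[of _ "{..j}"]) auto
  have jI: "j \<in> I'" unfolding I'_def using jn rjw rjc by simp
  have ws: "r s \<le> w" using z w0ge ww0 by simp
  have sub1: "(\<Union>i\<in>I'. {t. Sj t = Some i}) \<subseteq> {w..<c}"
  proof
    fix t assume "t \<in> (\<Union>i\<in>I'. {t. Sj t = Some i})"
    then obtain i where i: "i \<in> I'" "Sj t = Some i" by blast
    hence "r i \<le> t \<and> t < c" using Sj_I[of i t] ws unfolding I'_def by auto
    thus "t \<in> {w..<c}" using i unfolding I'_def by auto
  qed
  have "card (\<Union>i\<in>I'. {t. Sj t = Some i}) = (\<Sum>i\<in>I'. card {t. Sj t = Some i})"
    using finI' valid_slots_fin[OF SjV] by (subst card_UN_disjoint) auto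
  also have "\<dots> = (\<Sum>i\<in>I'. p i)"
  proof (rule sum.cong[OF refl])
    fix i assume "i \<in> I'"
    hence "i \<in> sched_jobs Sj" using Sj_I[of i 0] ws unfolding I'_def by auto
    thus "card {t. Sj t = Some i} = p i" by (rule valid_cnt[OF SjV])
  qed
  finally have bound: "(\<Sum>i\<in>I'. p i) \<le> nat (c - w)"
    using card_mono[OF _ sub1] by simp
  define U where "U = (\<Union>i\<in>I'. {t. S t = Some i})"
  have Ufin: "finite U" unfolding U_def by (rule finite_subset[OF _ M_busy_fin[OF SM]]) blast
  have "card U = (\<Sum>i\<in>I'. card {t. S t = Some i})"
    unfolding U_def using finI' M_slots_fin[OF SM] by (subst card_UN_disjoint) auto
  also have "\<dots> \<le> (\<Sum>i\<in>I'. p i)"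
  proof (rule sum_mono)
    fix i assume "i \<in> I'"
    show "card {t. S t = Some i} \<le> p i"
    proof (cases "i \<in> J")
      case True thus ?thesis using M_cnt[OF SM] by simp
    next
      case False
      hence "{t. S t = Some i} = {}" using M_slot[OF SM] by blast
      thus ?thesis by simp
    qed
  qed
  finally have cU: "card U \<le> nat (c - w)" using bound by simp
  have sub2: "{w..<c} \<subseteq> U - {u}"
  proof
    fix t assume t: "t \<in> {w..<c}"
    hence tlt: "t < \<theta>" "w \<le> t" "t < c" using c\<theta> by auto
    have tz: "z \<le> t" using tlt w0ge ww0 by simp
    have "S t \<noteq> None"
    proof
      assume "S t = None"
      hence "t \<in> Id" unfolding Id_def using tz tlt by simp
      thus False using Id_lt ww0 tlt by fastforce
    qed
    then obtain i where i: "S t = Some i" by blast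
    have "d i \<le> d j"
    proof (rule ccontr)
      assume "\<not> d i \<le> d j"
      hence "t \<in> X" unfolding X_def using i tlt ww0 by auto
      thus False using X_lt tlt by fastforce
    qed
    hence wr: "w \<le> r i" using claim[OF i] tlt by simp
    have iJ: "i \<in> J" and rit: "r i \<le> t" using M_slot[OF SM i] by auto
    have "i \<le> j" using d_le_imp[of i j] \<open>d i \<le> d j\<close> iJ J_sub jn by blast
    hence "i \<in> I'" unfolding I'_def using iJ wr rit tlt unfolding J_def by auto
    thus "t \<in> U - {u}" unfolding U_def using i tlt c\<theta> u\<theta> by auto
  qed
  have uU: "u \<in> U" unfolding U_def using jI u by blast
  have "card {w..<c} \<le> card (U - {u})" using card_mono[OF _ sub2] Ufin by simp
  also have "\<dots> < card U" using Ufin uU by (rule card_Diff1_less)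
  finally have "nat (c - w) < card U" by simp
  thus False using cU by simp
qed

end



context L8
begin

definition W where "W z = card {t. z \<le> t \<and> Q' t \<noteq> None}"

lemma busyQ'_fin: "finite {t. Q' t \<noteq> None}" using M_busy_fin[OF Q'_M[OF theta]] .

lemma M_suffix:
  assumes S: "S \<in> M z" and z: "z \<le> \<theta>"
  shows "card {t. z \<le> t \<and> S t \<noteq> None} = W z"
proof -
  have QM: "Q' \<in> M z" using Q'_M[OF z] .
  have pre: "{t. t < z \<and> S t \<noteq> None} = {t. t < z \<and> Q' t \<noteq> None}"
    using M_pre[OF S] Q'_pre z by auto
  have split: "\<And>T. {t. T t \<noteq> None} = {t. t < z \<and> T t \<noteq> None} \<union> {t. z \<le> t \<and> T t \<noteq> None}" by auto
  have c1: "card {t. S t \<noteq> None} = card {t. t < z \<and> S t \<noteq> None} + card {t. z \<le> t \<and> S t \<noteq> None}"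
    using M_busy_fin[OF S] by (subst split) (rule card_Un_disjoint, auto intro: finite_subset)
  have c2: "card {t. Q' t \<noteq> None} = card {t. t < z \<and> Q' t \<noteq> None} + card {t. z \<le> t \<and> Q' t \<noteq> None}"
    using M_busy_fin[OF QM] by (subst split) (rule card_Un_disjoint, auto intro: finite_subset)
  show ?thesis using c1 c2 pre M_total[OF S] M_total[OF QM] unfolding W_def by simp
qed

lemma W_mono: "z \<le> z' \<Longrightarrow> W z' \<le> W z"
  unfolding W_def by (rule card_mono[OF finite_subset[OF _ busyQ'_fin]]) auto

lemma W_rs: "int (W (r s)) \<le> \<theta> - r s"
proof -
  obtain S where S: "S \<in> M (r s)"
   and e: "\<forall>t i j t'. r s \<le> t \<longrightarrow> S t = Some i \<longrightarrow> S t' = Some j \<longrightarrow> r j \<le> t \<longrightarrow> t \<le> t' \<longrightarrow> d i \<le> d j"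
   and w: "\<forall>t j t'. r s \<le> t \<longrightarrow> S t = None \<longrightarrow> S t' = Some j \<longrightarrow> r j \<le> t \<longrightarrow> t' \<le> t"
    using extremal[OF theta] by blast
  have "{t. r s \<le> t \<and> S t \<noteq> None} \<subseteq> {r s..<\<theta>}"
  proof
    fix t assume "t \<in> {t. r s \<le> t \<and> S t \<noteq> None}"
    then obtain j where t: "r s \<le> t" "S t = Some j" by auto
    have "t < \<theta>" using key[OF S order_refl theta e w _ t(2)] by simp
    thus "t \<in> {r s..<\<theta>}" using t by simp
  qed
  hence "card {t. r s \<le> t \<and> S t \<noteq> None} \<le> nat (\<theta> - r s)"
    using card_mono[of "{r s..<\<theta>}"] by fastforce
  thus ?thesis using M_suffix[OF S theta] theta by simp
qed

definition zs where "zs = Min {z. r s \<le> z \<and> z \<le> \<theta> \<and> \<theta> - z \<le> int (W z)}"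

lemma zs_props: "r s \<le> zs" "zs \<le> \<theta>" "int (W zs) = \<theta> - zs"
proof -
  define Z where "Z = {z. r s \<le> z \<and> z \<le> \<theta> \<and> \<theta> - z \<le> int (W z)}"
  have Zfin: "finite Z" unfolding Z_def by (rule finite_subset[of _ "{r s..\<theta>}"]) auto
  have "\<theta> \<in> Z" unfolding Z_def using theta by simp
  hence Zne: "Z \<noteq> {}" by blast
  have zZ: "zs \<in> Z" unfolding zs_def Z_def[symmetric] using Zfin Zne by simp
  have zmin: "\<And>y. y \<in> Z \<Longrightarrow> zs \<le> y" unfolding zs_def Z_def[symmetric] using Zfin by simp
  show "r s \<le> zs" "zs \<le> \<theta>" using zZ unfolding Z_def by auto
  have ge: "\<theta> - zs \<le> int (W zs)" using zZ unfolding Z_def by auto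
  have "int (W zs) \<le> \<theta> - zs"
  proof (cases "zs = r s")
    case True thus ?thesis using W_rs by simp
  next
    case False
    hence "r s \<le> zs - 1" using zZ unfolding Z_def by auto
    moreover have "zs - 1 \<le> \<theta>" using zZ unfolding Z_def by auto
    moreover have "zs - 1 \<notin> Z" using zmin by force
    ultimately have "int (W (zs - 1)) < \<theta> - (zs - 1)" unfolding Z_def by auto
    moreover have "W zs \<le> W (zs - 1)" by (rule W_mono) simp
    ultimately show ?thesis by simp
  qed
  thus "int (W zs) = \<theta> - zs" using ge by simp
qed

end



context L8
begin

lemma Q_rs: "Q t \<noteq> None \<Longrightarrow> r s \<le> t"
proof -
  assume "Q t \<noteq> None"
  then obtain j where j: "Q t = Some j" by auto
  hence "j \<in> sched_jobs Q" unfolding sched_jobs_def by blast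
  hence "r s \<le> r j" using Qsched by auto
  thus ?thesis using valid_slot[OF Qv j] by simp
qed

lemma gapsQ_fin: "finite (gaps r s Q)"
proof -
  have "gaps r s Q \<subseteq> (\<Union>b\<in>busy Q. {r s..<b} \<times> {b})"
    unfolding gaps_def busy_def by auto
  moreover have "finite (\<Union>b\<in>busy Q. {r s..<b} \<times> {b})" using Qbusy_fin by auto
  ultimately show ?thesis by (rule finite_subset)
qed

lemma main:
  assumes Qg: "card (gaps r s Q) \<le> g"
  shows "\<exists>R. sk_schedule n p r d s k' R \<and> J \<subseteq> sched_jobs R \<and>
             cmax r s R \<le> \<theta> \<and> card (gaps r s R) \<le> g \<and>
             (cmax r s R < \<theta> \<longrightarrow> card (gaps r s R) < g)"
proof -
  note zp = zs_props
  obtain S where SM: "S \<in> M zs"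
   and e: "\<forall>t i j t'. zs \<le> t \<longrightarrow> S t = Some i \<longrightarrow> S t' = Some j \<longrightarrow> r j \<le> t \<longrightarrow> t \<le> t' \<longrightarrow> d i \<le> d j"
   and w: "\<forall>t j t'. zs \<le> t \<longrightarrow> S t = None \<longrightarrow> S t' = Some j \<longrightarrow> r j \<le> t \<longrightarrow> t' \<le> t"
    using extremal[OF zp(2)] by blast
  define B where "B = {t. zs \<le> t \<and> S t \<noteq> None}"
  have Bfin: "finite B" unfolding B_def by (rule finite_subset[OF _ M_busy_fin[OF SM]]) blast
  have cardB: "int (card B) = \<theta> - zs" using M_suffix[OF SM zp(2)] zp(3) unfolding B_def by simp
  have noidle: "\<And>t. zs \<le> t \<Longrightarrow> t < \<theta> \<Longrightarrow> S t \<noteq> None"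
  proof
    fix t0 assume t0: "zs \<le> t0" "t0 < \<theta>" "S t0 = None"
    have lt: "\<And>u. S u \<noteq> None \<Longrightarrow> u < \<theta>"
      using key[OF SM zp(1,2) e w] t0 by blast
    have "B \<subseteq> {zs..<\<theta>} - {t0}" unfolding B_def using lt t0 by auto
    hence "card B \<le> card ({zs..<\<theta>} - {t0})" by (intro card_mono) auto
    also have "\<dots> < card {zs..<\<theta>}" using t0 by (intro card_Diff1_less) auto
    finally show False using cardB by simp
  qed
  have "{zs..<\<theta>} \<subseteq> B" unfolding B_def using noidle by auto
  moreover have "card {zs..<\<theta>} = card B" using cardB by simp
  ultimately have Beq: "{zs..<\<theta>} = B" using Bfin by (intro card_subset_eq) auto
  have busy_lt: "\<And>t. S t \<noteq> None \<Longrightarrow> t < \<theta>"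
  proof -
    fix t assume a: "S t \<noteq> None"
    show "t < \<theta>"
    proof (cases "zs \<le> t")
      case True thus ?thesis using a Beq unfolding B_def by auto
    next
      case False thus ?thesis using zp(2) by simp
    qed
  qed
  have Spre: "\<And>t. t < zs \<Longrightarrow> S t = Q t" using M_pre[OF SM] by blast
  have Sfin: "finite (busy S)" using M_busy_fin[OF SM] unfolding busy_def .
  have schedS: "sched_jobs S = J"
  proof
    show "sched_jobs S \<subseteq> J" unfolding sched_jobs_def using M_slot[OF SM] by blast
    show "J \<subseteq> sched_jobs S"
    proof
      fix j assume jJ: "j \<in> J"
      hence "card {t. S t = Some j} = p j" using M_cnt[OF SM] by blast
      moreover have "p j \<ge> 1" using p_pos jJ J_sub by blast
      ultimately have "{t. S t = Some j} \<noteq> {}" by (metis card.empty not_one_le_zero)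
      thus "j \<in> sched_jobs S" unfolding sched_jobs_def by blast
    qed
  qed
  have S_rs: "\<forall>t. S t \<noteq> None \<longrightarrow> r s \<le> t"
  proof (intro allI impI)
    fix t assume "S t \<noteq> None"
    then obtain j where j: "S t = Some j" by auto
    thus "r s \<le> t" using M_slot[OF SM j] unfolding J_def by auto
  qed
  have v1: "\<forall>t j. S t = Some j \<longrightarrow> 1 \<le> j \<and> j \<le> n \<and> r j \<le> t \<and> t < d j"
  proof (intro allI impI)
    fix t j assume "S t = Some j"
    thus "1 \<le> j \<and> j \<le> n \<and> r j \<le> t \<and> t < d j" using M_slot[OF SM] J_sub by force
  qed
  have v2: "\<forall>j \<in> sched_jobs S. card {t. S t = Some j} = p j"
    using M_cnt[OF SM] schedS by blast
  have v3: "\<forall>t j j'. S t = Some j \<longrightarrow> j' \<in> sched_jobs S \<longrightarrow> r j' \<le> t \<longrightarrow>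
        (\<exists>t'\<ge>t. S t' = Some j') \<longrightarrow> d j \<le> d j'"
  proof (intro allI impI)
    fix t j j' assume a: "S t = Some j" "j' \<in> sched_jobs S" "r j' \<le> t" "\<exists>t'\<ge>t. S t' = Some j'"
    then obtain t' where t': "t \<le> t'" "S t' = Some j'" by blast
    show "d j \<le> d j'"
    proof (cases "zs \<le> t")
      case True thus ?thesis using e a t' by blast
    next
      case False
      have Qt: "Q t = Some j" using Spre[of t] False a by simp
      obtain t'' where t'': "t \<le> t''" "Q t'' = Some j'"
      proof (cases "zs \<le> t'")
        case True
        then obtain t'' where t2: "t'' \<ge> zs" "Q t'' = Some j'" using M_later[OF SM True t'(2)] by blast
        have "t \<le> t''" using t2(1) \<open>\<not> zs \<le> t\<close> by simp
        thus ?thesis using t2(2) by (rule that)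
      next
        case False
        thus ?thesis using that t' Spre[of t'] by auto
      qed
      have "j' \<in> sched_jobs Q" using t'' unfolding sched_jobs_def by blast
      thus ?thesis using valid_edf[OF Qv Qt _ a(3) t''] by simp
    qed
  qed
  have valid: "valid_schedule n p r d S"
    unfolding valid_schedule_def using v1 v2 v3 by blast
  have cS: "cmax r s S \<le> \<theta>" using cmax_le[where r=r and s=s and S=S and b=\<theta>] Sfin busy_lt theta by blast
  have cS_rs: "r s \<le> cmax r s S" using cmax_ge_rs[where r=r and s=s and S=S] Sfin S_rs by blast
  have cQ: "cmax r s Q \<le> d k'" using Q unfolding sk_schedule_def by blast
  have schedEq: "sched_jobs S = {j. 1 \<le> j \<and> j \<le> k' \<and> r s \<le> r j \<and> r j < cmax r s S}"
  proof
    show "sched_jobs S \<subseteq> {j. 1 \<le> j \<and> j \<le> k' \<and> r s \<le> r j \<and> r j < cmax r s S}"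
    proof
      fix j assume js: "j \<in> sched_jobs S"
      then obtain t where t: "S t = Some j" unfolding sched_jobs_def by blast
      have "t + 1 \<le> cmax r s S" using cmax_ge[OF Sfin] t by simp
      moreover have "r j \<le> t" using M_slot[OF SM t] by simp
      moreover have "j \<in> J" using js schedS by simp
      ultimately show "j \<in> {j. 1 \<le> j \<and> j \<le> k' \<and> r s \<le> r j \<and> r j < cmax r s S}"
        unfolding J_def by simp
    qed
    show "{j. 1 \<le> j \<and> j \<le> k' \<and> r s \<le> r j \<and> r j < cmax r s S} \<subseteq> sched_jobs S"
    proof
      fix j assume "j \<in> {j. 1 \<le> j \<and> j \<le> k' \<and> r s \<le> r j \<and> r j < cmax r s S}"
      hence "j \<in> J" using cS unfolding J_def by simp
      thus "j \<in> sched_jobs S" using schedS by simp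
    qed
  qed
  have cSk: "cmax r s S \<le> d k'" using cS cQ Q_late by simp
  have sk: "sk_schedule n p r d s k' S"
    unfolding sk_schedule_def using valid schedEq cSk by blast
  obtain tq where tq: "\<theta> \<le> tq" "Q tq \<noteq> None" using Q_late_busy by blast
  define BQ where "BQ = {t. zs \<le> t \<and> Q t \<noteq> None}"
  have BQfin: "finite BQ" unfolding BQ_def
    by (rule finite_subset[OF _ Qbusy_fin]) (auto simp: busy_def)
  have "tq \<in> BQ" unfolding BQ_def using tq zp(2) by simp
  hence BQne: "BQ \<noteq> {}" by blast
  define bQ where "bQ = Min BQ"
  have bQin: "bQ \<in> BQ" unfolding bQ_def using BQfin BQne by simp
  have bQmin: "\<And>t. t \<in> BQ \<Longrightarrow> bQ \<le> t" unfolding bQ_def using BQfin by simp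
  define \<phi> where "\<phi> = (\<lambda>(a::int, b::int). if b < zs then (a, b) else (a, bQ))"
  have gS: "\<And>a b. (a,b) \<in> gaps r s S \<Longrightarrow> b < \<theta> \<and> (b < zs \<or> b = zs)"
  proof -
    fix a b assume ab: "(a,b) \<in> gaps r s S"
    hence sb: "S b \<noteq> None" and ab2: "a < b" and idle: "\<forall>t. a \<le> t \<and> t < b \<longrightarrow> S t = None"
      unfolding gaps_def by auto
    have "b < \<theta>" using busy_lt sb by blast
    moreover have "b \<le> zs"
    proof (rule ccontr)
      assume "\<not> b \<le> zs"
      hence "S (b - 1) \<noteq> None" using noidle[of "b - 1"] \<open>b < \<theta>\<close> by simp
      moreover have "S (b - 1) = None" using idle ab2 by simp
      ultimately show False by simp
    qed
    ultimately show "b < \<theta> \<and> (b < zs \<or> b = zs)" by auto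
  qed
  have map: "\<phi> ` gaps r s S \<subseteq> gaps r s Q"
  proof
    fix x assume "x \<in> \<phi> ` gaps r s S"
    then obtain a b where ab: "(a,b) \<in> gaps r s S" and x: "x = \<phi> (a,b)" by auto
    have g: "r s \<le> a" "a < b" "\<forall>t. a \<le> t \<and> t < b \<longrightarrow> S t = None" "S b \<noteq> None"
      "a = r s \<or> S (a - 1) \<noteq> None" using ab unfolding gaps_def by auto
    show "x \<in> gaps r s Q"
    proof (cases "b < zs")
      case True
      have "\<forall>t. a \<le> t \<and> t < b \<longrightarrow> Q t = None" using g(3) Spre True by auto
      moreover have "Q b \<noteq> None" using g(4) Spre True by auto
      moreover have "a = r s \<or> Q (a - 1) \<noteq> None" using g(5) Spre[of "a - 1"] True g(2) by auto
      ultimately show ?thesis using x True g(1,2) unfolding \<phi>_def gaps_def by simp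
    next
      case False
      hence bz: "b = zs" using gS[OF ab] by simp
      have xe: "x = (a, bQ)" using x False unfolding \<phi>_def by simp
      have bQz: "zs \<le> bQ" "Q bQ \<noteq> None" using bQin unfolding BQ_def by auto
      have "\<forall>t. a \<le> t \<and> t < bQ \<longrightarrow> Q t = None"
      proof (intro allI impI)
        fix t assume t: "a \<le> t \<and> t < bQ"
        show "Q t = None"
        proof (cases "t < zs")
          case True thus ?thesis using g(3) Spre bz t by auto
        next
          case False
          show ?thesis
          proof (rule ccontr)
            assume "Q t \<noteq> None"
            hence "t \<in> BQ" unfolding BQ_def using False by simp
            thus False using bQmin t by fastforce
          qed
        qed
      qed
      moreover have "a = r s \<or> Q (a - 1) \<noteq> None" using g(5) Spre[of "a - 1"] bz g(2) by auto
      ultimately show ?thesis using xe g(1,2) bz bQz unfolding gaps_def by simp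
    qed
  qed
  have inj: "inj_on \<phi> (gaps r s S)"
  proof (rule inj_onI)
    fix x y assume x: "x \<in> gaps r s S" and y: "y \<in> gaps r s S" and eq: "\<phi> x = \<phi> y"
    obtain a b where xab: "x = (a,b)" by fastforce
    obtain a' b' where yab: "y = (a',b')" by fastforce
    have bQz: "zs \<le> bQ" using bQin unfolding BQ_def by auto
    show "x = y"
      using eq gS[OF x[unfolded xab]] gS[OF y[unfolded yab]] bQz unfolding xab yab \<phi>_def
      by (auto split: if_splits)
  qed
  have cardle: "card (gaps r s S) \<le> card (gaps r s Q)"
    by (rule card_inj_on_le[OF inj map gapsQ_fin])
  have partb: "cmax r s S < \<theta> \<longrightarrow> card (gaps r s S) < g"
  proof
    assume lt: "cmax r s S < \<theta>"
    have zt: "zs = \<theta>"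
    proof (rule ccontr)
      assume "zs \<noteq> \<theta>"
      hence "S (\<theta> - 1) \<noteq> None" using noidle zp(2) by simp
      hence "\<theta> - 1 + 1 \<le> cmax r s S" using cmax_ge[OF Sfin] by blast
      thus False using lt by simp
    qed
    have S_idle: "S (\<theta> - 1) = None"
    proof (rule ccontr)
      assume "S (\<theta> - 1) \<noteq> None"
      hence "\<theta> - 1 + 1 \<le> cmax r s S" using cmax_ge[OF Sfin] by blast
      thus False using lt by simp
    qed
    hence Qidle: "Q (\<theta> - 1) = None" using Spre[of "\<theta> - 1"] zt by simp
    have rs1: "r s \<le> \<theta> - 1" using cS_rs lt by simp
    have tq1: "\<theta> - 1 < tq" using tq by simp
    obtain a0 b0 where ab0: "(a0,b0) \<in> gaps r s Q" "\<theta> - 1 < b0"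
      using gap_exists[where r=r and s=s and Q=Q, OF Qbusy_fin rs1 Qidle tq1 tq(2)] by blast
    have "\<phi> ` gaps r s S \<subseteq> gaps r s Q - {(a0,b0)}"
    proof
      fix x assume xi: "x \<in> \<phi> ` gaps r s S"
      then obtain a b where ab: "(a,b) \<in> gaps r s S" and x: "x = \<phi> (a,b)" by auto
      have "b < \<theta>" using gS[OF ab] by simp
      hence "x = (a,b)" using x zt unfolding \<phi>_def by simp
      hence "x \<noteq> (a0,b0)" using \<open>b < \<theta>\<close> ab0 by auto
      thus "x \<in> gaps r s Q - {(a0,b0)}" using map xi by blast
    qed
    hence "card (gaps r s S) \<le> card (gaps r s Q - {(a0,b0)})"
      using card_inj_on_le[OF inj] gapsQ_fin by blast
    also have "\<dots> < card (gaps r s Q)" by (rule card_Diff1_less[OF gapsQ_fin ab0(1)])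
    finally show "card (gaps r s S) < g" using Qg by simp
  qed
  show ?thesis
    using sk schedS cS cardle Qg partb by (intro exI[of _ S]) auto
qed

end

theorem lemma8:
  fixes n :: nat and p :: "nat \<Rightarrow> nat" and r d :: "nat \<Rightarrow> int"
    and s k' g :: nat and \<theta> :: int and Q :: schedule
  assumes p_pos: "\<forall>j \<in> {1..n}. 1 \<le> p j"
    and d_mono: "strict_mono_on {1..n} d"
    and r_inj: "inj_on r {1..n}"
    and feas: "feasible n p r d"
    and s: "s \<in> {1..n}" and k': "k' \<in> {1..n}"
    and theta: "r s \<le> \<theta>"
    and edf: "\<forall>j. 1 \<le> j \<and> j \<le> k' \<and> r s \<le> r j \<and> r j < \<theta> \<longrightarrow>
               (\<exists>S. sk_schedule n p r d s j S \<and> j \<in> sched_jobs S \<and> compl S j \<le> \<theta>)"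
    and Q: "sk_schedule n p r d s k' Q"
    and Q_late: "cmax r s Q > \<theta>"
    and Q_gaps: "card (gaps r s Q) \<le> g"
  shows "\<exists>R. sk_schedule n p r d s k' R \<and>
             {j. 1 \<le> j \<and> j \<le> k' \<and> r s \<le> r j \<and> r j < \<theta>} \<subseteq> sched_jobs R \<and>
             cmax r s R \<le> \<theta> \<and> card (gaps r s R) \<le> g \<and>
             (cmax r s R < \<theta> \<longrightarrow> card (gaps r s R) < g)"
proof -
  interpret L8 n p r d s k' \<theta> Q
    using p_pos d_mono s k' theta edf Q Q_late by unfold_locales
  show ?thesis using main[OF Q_gaps] unfolding J_def .
qed


end
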